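(* Every cubic space $(W,g)$ of dimension at most $\aleph_0$ embeds into the cubic space $V(\infty)$.
   Context: $k$ is algebraically closed of characteristic different from $2,3$. For a vector space with a basis, the dual functionals are called coordinates; $P_n(V)$ is the space of formal, possibly infinite, $k$-linear combinations of degree-$n$ monomials in the coordinates. A cubic space is $(V,f)$ with $f\in P_3(V)$; an embedding $(W,g)\to(V,f)$ is a $k$-linear map $\phi:W\to V$ with $f\circ\phi=g$. The cubic space $V(\infty)$ has coordinates $\{x_i\}_{i\ge1}\cup\{y_{i,j}\}_{i,j\ge1}$ and form $f_\infty=3\sum_{i\ge1}x_iq_i$ with $q_i=\sum_{j\ge1}y_{i,j}^2$. *)

theory Defs
  imports Main "HOL-Library.Multiset" "HOL-Library.Countable_Set"
    "HOL-Computational_Algebra.Polynomial"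
begin

definition alg_closed :: "'k::field itself \<Rightarrow> bool" where
  "alg_closed _ \<longleftrightarrow> (\<forall>p::'k poly. degree p > 0 \<longrightarrow> (\<exists>x. poly p x = 0))"

definition fin_vec :: "'i set \<Rightarrow> ('i \<Rightarrow> 'k::zero) set" where
  "fin_vec I = {v. finite {i. v i \<noteq> 0} \<and> (\<forall>i. i \<notin> I \<longrightarrow> v i = 0)}"

text \<open>An element of P_3(V): a (possibly infinite) family of coefficients of the degree-3
  monomials in the coordinates, a monomial being a multiset of size 3 of basis indices.\<close>
definition cubic_eval :: "('i multiset \<Rightarrow> 'k::comm_ring_1) \<Rightarrow> ('i \<Rightarrow> 'k) \<Rightarrow> 'k" where
  "cubic_eval c v =
     (\<Sum>m \<in> {m. size m = 3 \<and> set_mset m \<subseteq> {i. v i \<noteq> 0}}. c m * (\<Prod>i \<in># m. v i))"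

definition is_linear_between :: "'j set \<Rightarrow> 'i set \<Rightarrow> (('j \<Rightarrow> 'k::field) \<Rightarrow> ('i \<Rightarrow> 'k)) \<Rightarrow> bool" where
  "is_linear_between J I \<phi> \<longleftrightarrow>
     (\<forall>w \<in> fin_vec J. \<phi> w \<in> fin_vec I) \<and>
     (\<forall>w \<in> fin_vec J. \<forall>u \<in> fin_vec J. \<phi> (\<lambda>j. w j + u j) = (\<lambda>i. \<phi> w i + \<phi> u i)) \<and>
     (\<forall>a. \<forall>w \<in> fin_vec J. \<phi> (\<lambda>j. a * w j) = (\<lambda>i. a * \<phi> w i))"

definition cubic_embedding ::
  "'j set \<Rightarrow> ('j multiset \<Rightarrow> 'k::field) \<Rightarrow> 'i set \<Rightarrow> ('i multiset \<Rightarrow> 'k)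
    \<Rightarrow> (('j \<Rightarrow> 'k) \<Rightarrow> ('i \<Rightarrow> 'k)) \<Rightarrow> bool" where
  "cubic_embedding J g I f \<phi> \<longleftrightarrow> is_linear_between J I \<phi> \<and>
     (\<forall>w \<in> fin_vec J. cubic_eval f (\<phi> w) = cubic_eval g w)"

text \<open>V(infinity): coordinates x_i = Inl i, y_{i,j} = Inr (i,j) (indices from 0);
  f_inf = 3 * sum_i x_i * sum_j y_{i,j}^2.\<close>
definition f_inf :: "(nat + nat \<times> nat) multiset \<Rightarrow> 'k::comm_ring_1" where
  "f_inf m = (if \<exists>i j. m = {#Inl i, Inr (i, j), Inr (i, j)#} then 3 else 0)"

end

theory Submission
  imports Defs
begin


lemma finite_msets_size:
  assumes "finite A" shows "finite {m. size m = n \<and> set_mset m \<subseteq> A}"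
proof -
  have "{m. size m = n \<and> set_mset m \<subseteq> A} \<subseteq> mset ` {xs. set xs \<subseteq> A \<and> length xs = n}"
  proof
    fix m assume "m \<in> {m. size m = n \<and> set_mset m \<subseteq> A}"
    moreover obtain xs where "mset xs = m" using ex_mset by blast
    ultimately show "m \<in> mset ` {xs. set xs \<subseteq> A \<and> length xs = n}" by auto
  qed
  thus ?thesis by (rule finite_subset) (intro finite_imageI finite_lists_length_eq assms)
qed

definition mk :: "nat \<Rightarrow> nat \<Rightarrow> (nat + nat \<times> nat) multiset" where
  "mk i j = {#Inl i, Inr (i, j), Inr (i, j)#}"

lemma mk_inj: "mk i j = mk i' j' \<Longrightarrow> i = i' \<and> j = j'"
proof -
  assume h: "mk i j = mk i' j'"
  have "Inr (i,j) \<in># mk i j" by (simp add: mk_def)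
  hence "Inr (i,j) \<in># mk i' j'" using h by simp
  thus ?thesis unfolding mk_def by auto
qed

lemma f_inf_mk: "f_inf (mk i j) = 3"
  unfolding f_inf_def mk_def by auto

lemma f_inf_eval:
  fixes v :: "nat + nat \<times> nat \<Rightarrow> 'k::field"
  assumes fin: "finite {x. v x \<noteq> 0}" and P: "finite P"
    and cov: "\<And>i j. v (Inl i) \<noteq> 0 \<Longrightarrow> v (Inr (i,j)) \<noteq> 0 \<Longrightarrow> (i,j) \<in> P"
  shows "cubic_eval f_inf v = (\<Sum>(i,j)\<in>P. 3 * v (Inl i) * v (Inr (i,j))^2)"
proof -
  define S where "S = {x. v x \<noteq> 0}"
  define M where "M = {m. size m = 3 \<and> set_mset m \<subseteq> S}"
  define P0 where "P0 = {(i,j). v (Inl i) \<noteq> 0 \<and> v (Inr (i,j)) \<noteq> 0}"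
  have fM: "finite M" unfolding M_def using finite_msets_size fin S_def by blast
  have P0P: "P0 \<subseteq> P" using cov unfolding P0_def by auto
  have sub: "(\<lambda>(i,j). mk i j) ` P0 \<subseteq> M" unfolding M_def P0_def S_def mk_def by auto
  have "cubic_eval f_inf v = (\<Sum>m\<in>M. f_inf m * (\<Prod>i \<in># m. v i))"
    unfolding cubic_eval_def M_def S_def by simp
  also have "\<dots> = (\<Sum>m\<in>(\<lambda>(i,j). mk i j) ` P0. f_inf m * (\<Prod>i \<in># m. v i))"
  proof (rule sum.mono_neutral_right[OF fM sub], rule ballI)
    fix m assume m: "m \<in> M - (\<lambda>(i,j). mk i j) ` P0"
    show "f_inf m * (\<Prod>i \<in># m. v i) = 0"
    proof (cases "\<exists>i j. m = {#Inl i, Inr (i, j), Inr (i, j)#}")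
      case True
      then obtain i j where mm: "m = mk i j" unfolding mk_def by blast
      have "set_mset m \<subseteq> S" using m M_def by auto
      hence "(i,j) \<in> P0" unfolding mm mk_def S_def P0_def by auto
      thus ?thesis using m mm by auto
    next
      case False thus ?thesis unfolding f_inf_def by simp
    qed
  qed
  also have "\<dots> = (\<Sum>(i,j)\<in>P0. 3 * v (Inl i) * v (Inr (i,j))^2)"
  proof (subst sum.reindex)
    show "inj_on (\<lambda>(i,j). mk i j) P0" by (auto simp: inj_on_def dest: mk_inj)
    show "(\<Sum>x\<in>P0. ((\<lambda>m. f_inf m * (\<Prod>i \<in># m. v i)) \<circ> (\<lambda>(i,j). mk i j)) x) =
          (\<Sum>(i,j)\<in>P0. 3 * v (Inl i) * v (Inr (i,j))^2)"
      by (rule sum.cong) (auto simp: f_inf_mk, simp add: mk_def power2_eq_square)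
  qed
  also have "\<dots> = (\<Sum>(i,j)\<in>P. 3 * v (Inl i) * v (Inr (i,j))^2)"
    by (rule sum.mono_neutral_left[OF P P0P]) (auto simp: P0_def)
  finally show ?thesis .
qed


definition T3 :: "nat \<Rightarrow> (nat \<times> nat \<times> nat) set" where
  "T3 N = {(a,b,c). a \<le> b \<and> b \<le> c \<and> c \<le> N}"

lemma sl3: "a \<le> b \<Longrightarrow> b \<le> c \<Longrightarrow> sorted_list_of_multiset {#a,b,c#} = [a,b,c::nat]"
proof -
  assume "a \<le> b" "b \<le> c"
  have "{#a,b,c#} = mset [a,b,c]" by simp
  hence "sorted_list_of_multiset {#a,b,c#} = sort [a,b,c]" by (metis sorted_list_of_multiset_mset)
  also have "\<dots> = [a,b,c]" using \<open>a \<le> b\<close> \<open>b \<le> c\<close> by (intro sorted_sort_id) simp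
  finally show ?thesis .
qed

lemma T3_inj: "inj_on (\<lambda>(a,b,c). {#a,b,c::nat#}) (T3 N)"
proof (rule inj_onI, clarsimp simp: T3_def)
  fix a b c a' b' c' :: nat
  assume h: "{#a, b, c#} = {#a', b', c'#}" "a \<le> b" "b \<le> c" "a' \<le> b'" "b' \<le> c'"
  have "[a,b,c] = [a',b',c']" using sl3[of a b c] sl3[of a' b' c'] h by metis
  thus "a = a' \<and> b = b' \<and> c = c'" by simp
qed

lemma T3_img: "(\<lambda>(a,b,c). {#a,b,c::nat#}) ` (T3 N) = {m. size m = 3 \<and> set_mset m \<subseteq> {..N}}"
proof
  show "(\<lambda>(a,b,c). {#a,b,c::nat#}) ` (T3 N) \<subseteq> {m. size m = 3 \<and> set_mset m \<subseteq> {..N}}"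
    by (auto simp: T3_def)
next
  show "{m. size m = 3 \<and> set_mset m \<subseteq> {..N}} \<subseteq> (\<lambda>(a,b,c). {#a,b,c::nat#}) ` (T3 N)"
  proof
    fix m :: "nat multiset" assume m: "m \<in> {m. size m = 3 \<and> set_mset m \<subseteq> {..N}}"
    define xs where "xs = sorted_list_of_multiset m"
    have mx: "mset xs = m" unfolding xs_def by simp
    have "length xs = size (mset xs)" by simp
    also have "\<dots> = 3" using m mx by simp
    finally have "length xs = 3" .
    then obtain a b c where xs: "xs = [a,b,c]"
      by (auto simp: numeral_3_eq_3 length_Suc_conv)
    have "sorted xs" unfolding xs_def by simp
    hence ab: "a \<le> b" "b \<le> c" using xs by auto
    have "c \<le> N" using m mx xs by auto
    moreover have "m = {#a,b,c#}" using mx xs by simp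
    ultimately show "m \<in> (\<lambda>(a,b,c). {#a,b,c::nat#}) ` (T3 N)"
      using ab by (auto simp: T3_def image_iff)
  qed
qed

lemma g_eval_nat:
  fixes w :: "nat \<Rightarrow> 'k::field" and g :: "nat multiset \<Rightarrow> 'k"
  assumes N: "\<And>i. w i \<noteq> 0 \<Longrightarrow> i \<le> N"
  shows "cubic_eval g w = (\<Sum>(a,b,c)\<in>T3 N. g {#a,b,c#} * (w a * (w b * w c)))"
proof -
  define M where "M = {m. size m = 3 \<and> set_mset m \<subseteq> {i. w i \<noteq> 0}}"
  define M' where "M' = {m. size m = 3 \<and> set_mset m \<subseteq> {..N}}"
  have fM': "finite M'" unfolding M'_def by (rule finite_msets_size) simp
  have sub: "M \<subseteq> M'" unfolding M_def M'_def using N by auto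
  have "cubic_eval g w = (\<Sum>m\<in>M. g m * (\<Prod>i \<in># m. w i))"
    unfolding cubic_eval_def M_def by simp
  also have "\<dots> = (\<Sum>m\<in>M'. g m * (\<Prod>i \<in># m. w i))"
  proof (rule sum.mono_neutral_left[OF fM' sub], rule ballI)
    fix m assume "m \<in> M' - M"
    then obtain i where "i \<in># m" "w i = 0" unfolding M_def M'_def by auto
    thus "g m * (\<Prod>i \<in># m. w i) = 0" by auto
  qed
  also have "\<dots> = (\<Sum>(a,b,c)\<in>T3 N. g {#a,b,c#} * (w a * (w b * w c)))"
    unfolding M'_def T3_img[symmetric]
    by (subst sum.reindex[OF T3_inj]) (auto intro!: sum.cong)
  finally show ?thesis .
qed


definition lin :: "(nat \<Rightarrow> 'k) \<Rightarrow> (nat \<Rightarrow> 'k::field) \<Rightarrow> 'k" where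
  "lin c w = (\<Sum>i\<in>{i. w i \<noteq> 0}. c i * w i)"

lemma lin_eq: "finite T \<Longrightarrow> {i. w i \<noteq> 0} \<subseteq> T \<Longrightarrow> lin c w = (\<Sum>i\<in>T. c i * w i)"
  unfolding lin_def by (rule sum.mono_neutral_left) auto

definition coefn :: "(nat multiset \<Rightarrow> 'k::field) \<Rightarrow> nat \<Rightarrow> nat \<Rightarrow> nat \<Rightarrow> 'k" where
  "coefn g a b c = (if a \<le> b \<and> b \<le> c then g {#a,b,c#} / 3 else 0)"

definition Ln :: "(nat multiset \<Rightarrow> 'k::field) \<Rightarrow> nat \<Rightarrow> nat \<Rightarrow> (nat \<Rightarrow> 'k) \<Rightarrow> 'k" where
  "Ln g a b w = lin (coefn g a b) w"

definition phin :: "'k \<Rightarrow> (nat multiset \<Rightarrow> 'k::field) \<Rightarrow> (nat \<Rightarrow> 'k) \<Rightarrow> (nat + nat \<times> nat \<Rightarrow> 'k)" where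
  "phin \<iota> g w = (\<lambda>v. case v of Inl a \<Rightarrow> w a
     | Inr (a, j) \<Rightarrow> if a \<le> j div 2 then
          (if even j then (w (j div 2) + Ln g a (j div 2) w) / 2
           else \<iota> * (w (j div 2) - Ln g a (j div 2) w) / 2) else 0)"

lemma sum_even_odd: fixes n :: nat shows "(\<Sum>j<2*n. F j) = (\<Sum>b<n. F (2*b) + F (2*b+1))"
proof (induction n)
  case (Suc n)
  have "(\<Sum>j<2*Suc n. F j) = (\<Sum>j<2*n. F j) + F (2*n) + F (2*n+1)" by (simp add: add.assoc)
  thus ?case using Suc by (simp add: add.assoc)
qed simp
lemma sq_id:
  fixes x L \<iota> :: "'k::field"
  assumes "\<iota> * \<iota> = -1" "(2::'k) \<noteq> 0"
  shows "((x + L) / 2)^2 + (\<iota> * (x - L) / 2)^2 = x * L"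
proof -
  have "(\<iota> * (x - L) / 2)^2 = (\<iota> * \<iota>) * (x - L)^2 / 4"
    by (simp add: power2_eq_square power_divide)
  also have "\<dots> = - ((x - L)^2 / 4)" using assms(1) by simp
  finally have e: "(\<iota> * (x - L) / 2)^2 = - ((x - L)^2 / 4)" .
  have four: "(4::'k) \<noteq> 0" using assms(2) by (metis mult_2_right numeral_Bit0 mult_zero_left no_zero_divisors)
  have "((x + L) / 2)^2 - (x - L)^2 / 4 = ((x+L)^2 - (x-L)^2) / 4"
    by (simp add: power_divide diff_divide_distrib)
  also have "(x+L)^2 - (x-L)^2 = 4 * (x * L)" by (simp add: power2_eq_square algebra_simps)
  finally show ?thesis using e four by simp
qed

lemma T3_sum: "(\<Sum>(a,b,c)\<in>T3 N. F a b c) =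
   (\<Sum>a\<le>N. \<Sum>b\<le>N. \<Sum>c\<le>N. if a \<le> b \<and> b \<le> c then F a b c else (0::'k::comm_monoid_add))"
proof -
  have "(\<Sum>(a,b,c)\<in>T3 N. F a b c) = (\<Sum>(a,b,c)\<in>{..N} \<times> {..N} \<times> {..N}. if a \<le> b \<and> b \<le> c then F a b c else 0)"
    by (rule sum.mono_neutral_cong_left) (auto simp: T3_def split: if_splits)
  also have "\<dots> = (\<Sum>a\<le>N. \<Sum>(b,c)\<in>{..N} \<times> {..N}. if a \<le> b \<and> b \<le> c then F a b c else 0)"
    unfolding sum.cartesian_product by (rule sum.cong) auto
  also have "\<dots> = (\<Sum>a\<le>N. \<Sum>b\<le>N. \<Sum>c\<le>N. if a \<le> b \<and> b \<le> c then F a b c else 0)"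
    unfolding sum.cartesian_product by (rule sum.cong) auto
  finally show ?thesis .
qed


lemma Ln_N:
  assumes N: "\<And>i. w i \<noteq> 0 \<Longrightarrow> i \<le> N"
  shows "Ln g a b w = (\<Sum>c\<le>N. coefn g a b c * w c)"
  unfolding Ln_def using N by (intro lin_eq) auto

lemma Ln_zero:
  assumes N: "\<And>i. w i \<noteq> 0 \<Longrightarrow> i \<le> N" and b: "N < b"
  shows "Ln g a b w = 0"
proof -
  have "Ln g a b w = (\<Sum>c\<le>N. coefn g a b c * w c)" by (rule Ln_N) (rule N)
  also have "\<dots> = 0" using b by (auto simp: coefn_def intro!: sum.neutral)
  finally show ?thesis .
qed

lemma phin_supp:
  assumes N: "\<And>i. w i \<noteq> 0 \<Longrightarrow> i \<le> N" and nz: "phin \<iota> g w v \<noteq> 0"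
  shows "v \<in> Inl ` {..N} \<union> Inr ` ({..N} \<times> {..<2*N+2})"
proof (cases v)
  case (Inl a)
  thus ?thesis using nz N by (auto simp: phin_def)
next
  case (Inr p)
  then obtain a j where v: "v = Inr (a,j)" by (cases p) auto
  have aj: "a \<le> j div 2" using nz v by (auto simp: phin_def split: if_splits)
  have "j div 2 \<le> N"
  proof (rule ccontr)
    assume "\<not> j div 2 \<le> N"
    hence w0: "w (j div 2) = 0" and l0: "Ln g a (j div 2) w = 0" using N Ln_zero[of w N, OF N] by force+
    have "phin \<iota> g w v = 0" unfolding v phin_def using w0 l0 by simp
    thus False using nz by simp
  qed
  hence "a \<le> N" "j < 2*N+2" using aj by auto
  thus ?thesis using v by auto
qed

lemma phin_fin:
  assumes N: "\<And>i. w i \<noteq> 0 \<Longrightarrow> i \<le> N"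
  shows "finite {v. phin \<iota> g w v \<noteq> 0}"
proof (rule finite_subset[of _ "Inl ` {..N} \<union> Inr ` ({..N} \<times> {..<2*N+2})"])
  show "{v. phin \<iota> g w v \<noteq> 0} \<subseteq> Inl ` {..N} \<union> Inr ` ({..N} \<times> {..<2*N+2})"
  proof
    fix v assume "v \<in> {v. phin \<iota> g w v \<noteq> 0}"
    thus "v \<in> Inl ` {..N} \<union> Inr ` ({..N} \<times> {..<2*N+2})" using phin_supp[of w N, OF N] by blast
  qed
qed simp

lemma phin_eval:
  fixes \<iota> :: "'k::field" and g :: "nat multiset \<Rightarrow> 'k"
  assumes i: "\<iota>*\<iota> = -1" and two: "(2::'k) \<noteq> 0" and three: "(3::'k) \<noteq> 0"
    and N: "\<And>i. w i \<noteq> 0 \<Longrightarrow> i \<le> N"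
  shows "cubic_eval f_inf (phin \<iota> g w) = cubic_eval g w"
proof -
  define v where "v = phin \<iota> g w"
  have "cubic_eval f_inf v = (\<Sum>(i,j)\<in>{..N} \<times> {..<2*(N+1)}. 3 * v (Inl i) * v (Inr (i,j))^2)"
  proof (rule f_inf_eval)
    show "finite {x. v x \<noteq> 0}" unfolding v_def by (rule phin_fin[of w N, OF N])
    show "finite ({..N} \<times> {..<2*(N+1)})" by simp
    fix i j assume "v (Inl i) \<noteq> 0" "v (Inr (i, j)) \<noteq> 0"
    thus "(i, j) \<in> {..N} \<times> {..<2*(N+1)}" using phin_supp[of w N, OF N] v_def by fastforce
  qed
  also have "\<dots> = (\<Sum>i\<le>N. 3 * w i * (\<Sum>j<2*(N+1). v (Inr (i,j))^2))"
    unfolding sum.cartesian_product[symmetric] sum_distrib_left by (simp add: v_def phin_def)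
  also have "\<dots> = (\<Sum>i\<le>N. 3 * w i * (\<Sum>b<N+1. v (Inr (i,2*b))^2 + v (Inr (i,2*b+1))^2))"
    unfolding sum_even_odd ..
  also have "\<dots> = (\<Sum>i\<le>N. 3 * w i * (\<Sum>b\<le>N. if i \<le> b then w b * (\<Sum>c\<le>N. coefn g i b c * w c) else 0))"
  proof (intro sum.cong refl arg_cong2[where f = "(*)"])
    fix i b
    have "v (Inr (i,2*b))^2 + v (Inr (i,2*b+1))^2 =
        (if i \<le> b then ((w b + Ln g i b w)/2)^2 + (\<iota> * (w b - Ln g i b w)/2)^2 else 0)"
      by (simp add: v_def phin_def)
    also have "\<dots> = (if i \<le> b then w b * (\<Sum>c\<le>N. coefn g i b c * w c) else 0)"
      using sq_id[OF i two] Ln_N[of w N, OF N] by simp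
    finally show "v (Inr (i,2*b))^2 + v (Inr (i,2*b+1))^2 =
        (if i \<le> b then w b * (\<Sum>c\<le>N. coefn g i b c * w c) else 0)" .
  qed (auto simp: lessThan_Suc_atMost)
  also have "\<dots> = (\<Sum>i\<le>N. \<Sum>b\<le>N. \<Sum>c\<le>N. if i \<le> b \<and> b \<le> c then g {#i,b,c#} * (w i * (w b * w c)) else 0)"
  proof (rule sum.cong[OF refl])
    fix i assume "i \<in> {..N}"
    have key: "3 * w i * (if i \<le> b then w b * (\<Sum>c\<le>N. coefn g i b c * w c) else 0) =
      (\<Sum>c\<le>N. if i \<le> b \<and> b \<le> c then g {#i,b,c#} * (w i * (w b * w c)) else 0)" for b
    proof (cases "i \<le> b")
      case True
      have "3 * w i * (w b * (\<Sum>c\<le>N. coefn g i b c * w c)) =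
          (\<Sum>c\<le>N. 3 * w i * (w b * (coefn g i b c * w c)))"
        by (simp add: sum_distrib_left)
      also have "\<dots> = (\<Sum>c\<le>N. if i \<le> b \<and> b \<le> c then g {#i,b,c#} * (w i * (w b * w c)) else 0)"
        using True three by (intro sum.cong refl) (auto simp: coefn_def field_simps)
      finally show ?thesis using True by simp
    qed simp
    have "3 * w i * (\<Sum>b\<le>N. if i \<le> b then w b * (\<Sum>c\<le>N. coefn g i b c * w c) else 0) =
        (\<Sum>b\<le>N. 3 * w i * (if i \<le> b then w b * (\<Sum>c\<le>N. coefn g i b c * w c) else 0))"
      by (rule sum_distrib_left)
    also have "\<dots> = (\<Sum>b\<le>N. \<Sum>c\<le>N. if i \<le> b \<and> b \<le> c then g {#i,b,c#} * (w i * (w b * w c)) else 0)"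
      by (rule sum.cong[OF refl]) (rule key)
    finally show "3 * w i * (\<Sum>b\<le>N. if i \<le> b then w b * (\<Sum>c\<le>N. coefn g i b c * w c) else 0) =
        (\<Sum>b\<le>N. \<Sum>c\<le>N. if i \<le> b \<and> b \<le> c then g {#i,b,c#} * (w i * (w b * w c)) else 0)" .
  qed
  also have "\<dots> = (\<Sum>(a,b,c)\<in>T3 N. g {#a,b,c#} * (w a * (w b * w c)))"
    by (rule T3_sum[symmetric])
  also have "\<dots> = cubic_eval g w" by (rule g_eval_nat[of w N, OF N, symmetric])
  finally show ?thesis unfolding v_def .
qed


lemma bound_nat: "finite {i::nat. w i \<noteq> 0} \<Longrightarrow> \<exists>N. \<forall>i. w i \<noteq> 0 \<longrightarrow> i \<le> N"
  using finite_nat_set_iff_bounded_le by auto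

lemma Ln_add:
  assumes "finite {i. w i \<noteq> 0}" "finite {i. u i \<noteq> 0}"
  shows "Ln g a b (\<lambda>j. w j + u j) = Ln g a b w + Ln g a b u"
proof -
  define T where "T = {i. w i \<noteq> 0} \<union> {i. u i \<noteq> 0}"
  have fT: "finite T" using assms T_def by simp
  have "Ln g a b (\<lambda>j. w j + u j) = (\<Sum>i\<in>T. coefn g a b i * (w i + u i))"
    unfolding Ln_def by (rule lin_eq[OF fT]) (auto simp: T_def)
  also have "\<dots> = (\<Sum>i\<in>T. coefn g a b i * w i) + (\<Sum>i\<in>T. coefn g a b i * u i)"
    by (simp add: distrib_left sum.distrib)
  also have "\<dots> = Ln g a b w + Ln g a b u"
    unfolding Ln_def by (subst (1 2) lin_eq[OF fT]) (auto simp: T_def)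
  finally show ?thesis .
qed

lemma Ln_smult:
  assumes "finite {i. w i \<noteq> 0}"
  shows "Ln g a b (\<lambda>j. c * w j) = c * Ln g a b w"
proof -
  define T where "T = {i. w i \<noteq> 0}"
  have fT: "finite T" using assms T_def by simp
  have "Ln g a b (\<lambda>j. c * w j) = (\<Sum>i\<in>T. coefn g a b i * (c * w i))"
    unfolding Ln_def by (rule lin_eq[OF fT]) (auto simp: T_def)
  also have "\<dots> = c * (\<Sum>i\<in>T. coefn g a b i * w i)"
    by (simp add: sum_distrib_left algebra_simps)
  also have "\<dots> = c * Ln g a b w"
    unfolding Ln_def by (subst lin_eq[OF fT]) (auto simp: T_def)
  finally show ?thesis .
qed

lemma h1: "(x + y + (L1 + L2)) / 2 = (x + L1) / 2 + (y + L2) / (2::'k::field)"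
  by (simp only: add_divide_distrib[symmetric] ac_simps)
lemma h2: "\<iota> * (x + y - (L1 + L2)) / 2 = \<iota> * (x - L1) / 2 + \<iota> * (y - L2) / (2::'k::field)"
  by (simp only: add_divide_distrib[symmetric]) (simp add: algebra_simps)
lemma h3: "(c * x + c * L) / 2 = c * ((x + L) / (2::'k::field))"
  by (simp add: algebra_simps)
lemma h4: "\<iota> * (c * x - c * L) / 2 = c * (\<iota> * (x - L) / (2::'k::field))"
  by (simp add: algebra_simps)

lemma phin_add:
  fixes w u :: "nat \<Rightarrow> 'k::field"
  assumes "finite {i. w i \<noteq> 0}" "finite {i. u i \<noteq> 0}"
  shows "phin \<iota> g (\<lambda>j. w j + u j) = (\<lambda>v. phin \<iota> g w v + phin \<iota> g u v)"
proof
  fix v show "phin \<iota> g (\<lambda>j. w j + u j) v = phin \<iota> g w v + phin \<iota> g u v"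
    by (cases v) (auto simp: phin_def Ln_add[OF assms] h1 h2)
qed

lemma phin_smult:
  fixes w :: "nat \<Rightarrow> 'k::field"
  assumes "finite {i. w i \<noteq> 0}"
  shows "phin \<iota> g (\<lambda>j. c * w j) = (\<lambda>v. c * phin \<iota> g w v)"
proof
  fix v show "phin \<iota> g (\<lambda>j. c * w j) v = c * phin \<iota> g w v"
    by (cases v) (auto simp: phin_def Ln_smult[OF assms] h3 h4)
qed

definition Tr :: "'j set \<Rightarrow> ('j \<Rightarrow> nat) \<Rightarrow> (nat \<Rightarrow> 'j) \<Rightarrow> ('j \<Rightarrow> 'k::zero) \<Rightarrow> nat \<Rightarrow> 'k" where
  "Tr J e d w = (\<lambda>n. if n \<in> e ` J then w (d n) else 0)"

lemma Tr_supp: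
  assumes de: "\<And>j. j \<in> J \<Longrightarrow> d (e j) = j" and w: "w \<in> fin_vec J"
  shows "{n. Tr J e d w n \<noteq> 0} = e ` {j. w j \<noteq> 0}"
proof
  have wJ: "\<And>j. w j \<noteq> 0 \<Longrightarrow> j \<in> J" using w unfolding fin_vec_def by blast
  show "{n. Tr J e d w n \<noteq> 0} \<subseteq> e ` {j. w j \<noteq> 0}"
  proof
    fix n assume "n \<in> {n. Tr J e d w n \<noteq> 0}"
    hence n: "n \<in> e ` J" "w (d n) \<noteq> 0" unfolding Tr_def by (auto split: if_splits)
    then obtain j where j: "j \<in> J" "n = e j" by blast
    hence "d n = j" using de by simp
    thus "n \<in> e ` {j. w j \<noteq> 0}" using n(2) j(2) by blast
  qed
  show "e ` {j. w j \<noteq> 0} \<subseteq> {n. Tr J e d w n \<noteq> 0}"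
  proof
    fix n assume "n \<in> e ` {j. w j \<noteq> 0}"
    then obtain j where j: "w j \<noteq> 0" "n = e j" by blast
    hence jJ: "j \<in> J" using wJ by blast
    hence "n \<in> e ` J" using j(2) by blast
    hence "Tr J e d w n = w (d (e j))" unfolding Tr_def using j(2) by simp
    also have "\<dots> = w j" using de[OF jJ] by simp
    finally show "n \<in> {n. Tr J e d w n \<noteq> 0}" using j(1) by simp
  qed
qed

lemma Tr_eval:
  fixes w :: "'j \<Rightarrow> 'k::field"
  assumes de: "\<And>j. j \<in> J \<Longrightarrow> d (e j) = j" and w: "w \<in> fin_vec J"
  shows "cubic_eval (\<lambda>M. g (image_mset d M)) (Tr J e d w) = cubic_eval g w"
proof -
  define S where "S = {j. w j \<noteq> 0}"
  have SJ: "S \<subseteq> J" using w unfolding S_def fin_vec_def by auto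
  have ed: "\<And>n. n \<in> e ` J \<Longrightarrow> e (d n) = n" using de by auto
  have supp: "{n. Tr J e d w n \<noteq> 0} = e ` S" unfolding S_def by (rule Tr_supp[OF de w])
  show ?thesis
    unfolding cubic_eval_def supp S_def[symmetric]
  proof (rule sum.reindex_bij_witness[symmetric, where i = "image_mset d" and j = "image_mset e"])
    fix m assume m: "m \<in> {m. size m = 3 \<and> set_mset m \<subseteq> S}"
    hence mJ: "set_mset m \<subseteq> J" using SJ by auto
    show "image_mset d (image_mset e m) = m"
      using mJ de by (simp add: image_mset.compositionality) (metis (mono_tags, lifting) comp_apply image_mset_cong multiset.map_ident subsetD)
    show "image_mset e m \<in> {m. size m = 3 \<and> set_mset m \<subseteq> e ` S}" using m by auto
    have "g (image_mset d (image_mset e m)) = g m"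
      using \<open>image_mset d (image_mset e m) = m\<close> by simp
    moreover have "(\<Prod>i \<in># image_mset e m. Tr J e d w i) = (\<Prod>i \<in># m. w i)"
    proof -
      have "image_mset (Tr J e d w) (image_mset e m) = image_mset w m"
        unfolding image_mset.compositionality
      proof (rule image_mset_cong)
        fix x assume "x \<in># m"
        hence xJ: "x \<in> J" using mJ by auto
        hence "e x \<in> e ` J" by simp
        thus "(Tr J e d w \<circ> e) x = w x" using de[OF xJ] by (simp add: Tr_def)
      qed
      thus ?thesis by simp
    qed
    ultimately show "g (image_mset d (image_mset e m)) * (\<Prod>i \<in># image_mset e m. Tr J e d w i) =
        g m * (\<Prod>i \<in># m. w i)" by simp
  next
    fix M assume M: "M \<in> {m. size m = 3 \<and> set_mset m \<subseteq> e ` S}"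
    hence MJ: "set_mset M \<subseteq> e ` J" using SJ by blast
    show "image_mset e (image_mset d M) = M"
      unfolding image_mset.compositionality
      by (subst image_mset_cong[where g = id]) (use MJ ed in auto)
    have "set_mset (image_mset d M) \<subseteq> S"
    proof
      fix y assume "y \<in> set_mset (image_mset d M)"
      hence "y \<in> d ` set_mset M" by (simp only: set_image_mset)
      then obtain x where x: "y = d x" "x \<in># M" by (rule imageE)
      have "set_mset M \<subseteq> e ` S" using M by simp
      hence "x \<in> e ` S" using x(2) by (rule subsetD)
      then obtain j where j: "j \<in> S" "x = e j" by (rule imageE)
      have "j \<in> J" using SJ j(1) by (rule subsetD)
      hence "d (e j) = j" by (rule de)
      hence "y = j" using x(1) j(2) by simp
      thus "y \<in> S" using j(1) by simp
    qed
    thus "image_mset d M \<in> {m. size m = 3 \<and> set_mset m \<subseteq> S}"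
      using M by simp
  qed
qed

theorem lemma4p3:
  fixes J :: "'j set" and g :: "'j multiset \<Rightarrow> 'k::field"
  assumes "alg_closed TYPE('k)"
    and "(2::'k) \<noteq> 0" and "(3::'k) \<noteq> 0"
    and "countable J"
  shows "\<exists>\<phi>. cubic_embedding J g (UNIV :: (nat + nat \<times> nat) set) f_inf \<phi>"
proof -
  have two: "(2::'k) \<noteq> 0" and three: "(3::'k) \<noteq> 0" using assms(2,3) .
  obtain \<iota> :: 'k where i: "\<iota> * \<iota> = -1"
  proof -
    have "degree [:1,0,1::'k:] > 0" by simp
    then obtain x where "poly [:1,0,1::'k:] x = 0" using assms(1) unfolding alg_closed_def by blast
    hence "x * x + 1 = 0" by (simp add: add.commute)
    hence "x * x = -1" by (simp add: eq_neg_iff_add_eq_0)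
    thus ?thesis using that by blast
  qed
  define e where "e = to_nat_on J"
  define d where "d = from_nat_into J"
  have de: "\<And>j. j \<in> J \<Longrightarrow> d (e j) = j" using assms(4) by (simp add: e_def d_def)
  define g' where "g' = (\<lambda>M. g (image_mset d M))"
  define \<phi> where "\<phi> = (\<lambda>w. phin \<iota> g' (Tr J e d w))"
  have finTr: "finite {n. Tr J e d w n \<noteq> 0}" if w: "w \<in> fin_vec J" for w :: "'j \<Rightarrow> 'k"
  proof -
    have "finite {j. w j \<noteq> 0}" using w unfolding fin_vec_def by simp
    moreover have eq: "{n. Tr J e d w n \<noteq> 0} = e ` {j. w j \<noteq> 0}"
      by (rule Tr_supp) (fact de, fact w)
    ultimately show ?thesis by simp
  qed
  have Tr_add: "Tr J e d (\<lambda>j. w j + u j) = (\<lambda>n. Tr J e d w n + Tr J e d u n)" for w u :: "'j \<Rightarrow> 'k"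
    by (auto simp: Tr_def)
  have Tr_smult: "Tr J e d (\<lambda>j. c * w j) = (\<lambda>n. c * Tr J e d w n)" for c and w :: "'j \<Rightarrow> 'k"
    by (auto simp: Tr_def)
  have "cubic_embedding J g (UNIV :: (nat + nat \<times> nat) set) f_inf \<phi>"
    unfolding cubic_embedding_def is_linear_between_def
  proof (intro conjI ballI allI)
    fix w :: "'j \<Rightarrow> 'k" assume w: "w \<in> fin_vec J"
    obtain N where N: "\<forall>i. Tr J e d w i \<noteq> 0 \<longrightarrow> i \<le> N" using bound_nat[OF finTr[OF w]] by blast
    hence N': "\<And>i. Tr J e d w i \<noteq> 0 \<Longrightarrow> i \<le> N" by blast
    show "\<phi> w \<in> fin_vec UNIV"
      unfolding fin_vec_def \<phi>_def using phin_fin[of "Tr J e d w" N, OF N'] by simp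
    have "cubic_eval f_inf (phin \<iota> g' (Tr J e d w)) = cubic_eval g' (Tr J e d w)"
      by (rule phin_eval[OF i two three]) (rule N')
    also have "\<dots> = cubic_eval g w" unfolding g'_def by (rule Tr_eval) (fact de, fact w)
    finally show "cubic_eval f_inf (\<phi> w) = cubic_eval g w" unfolding \<phi>_def .
    fix u :: "'j \<Rightarrow> 'k" assume u: "u \<in> fin_vec J"
    show "\<phi> (\<lambda>j. w j + u j) = (\<lambda>i. \<phi> w i + \<phi> u i)"
      unfolding \<phi>_def Tr_add by (rule phin_add[OF finTr[OF w] finTr[OF u]])
  next
    fix a :: 'k and w :: "'j \<Rightarrow> 'k" assume w: "w \<in> fin_vec J"
    show "\<phi> (\<lambda>j. a * w j) = (\<lambda>i. a * \<phi> w i)"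
      unfolding \<phi>_def Tr_smult by (rule phin_smult[OF finTr[OF w]])
  qed
  thus ?thesis by blast
qed

end
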